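(* A tree $T$ is compact Hausdorff in the coarse wedge topology if and only if $T$ is chain-complete and has finitely many minimal elements.
   Context: A tree is a partially ordered set in which the set of predecessors of each element is well-ordered. Levels: $T(0)$ is the set of minimal elements; $T(\alpha)$ is the set of minimal elements of $T\setminus\bigcup_{\beta<\alpha}T(\beta)$; an element is on a successor level if it lies in $T(\alpha+1)$ for some $\alpha$. $T$ is chain-complete if every nonempty chain has a supremum (least upper bound) in $T$. For $t\in T$, $V_t=\{s\in T:s\ge t\}$. The coarse wedge topology has subbase all $V_t$ and $T\setminus V_t$ with $t$ minimal or on a successor level. *)

theory Defs
  imports "HOL-Analysis.Analysis"
begin

text \<open>A tree is represented as a subset T of a partially ordered type, with the induced order.\<close>

definition preds :: "'a::order set \<Rightarrow> 'a \<Rightarrow> 'a set" where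
  "preds T t = {s \<in> T. s < t}"

definition well_ordered_set :: "'a::order set \<Rightarrow> bool" where
  "well_ordered_set A \<longleftrightarrow>
     (\<forall>x\<in>A. \<forall>y\<in>A. x \<le> y \<or> y \<le> x) \<and>
     (\<forall>B. B \<subseteq> A \<longrightarrow> B \<noteq> {} \<longrightarrow> (\<exists>b\<in>B. \<forall>c\<in>B. b \<le> c))"

definition is_tree :: "'a::order set \<Rightarrow> bool" where
  "is_tree T \<longleftrightarrow> (\<forall>t\<in>T. well_ordered_set (preds T t))"

definition minimal_elements :: "'a::order set \<Rightarrow> 'a set" where
  "minimal_elements T = {t \<in> T. preds T t = {}}"

text \<open>t lies on a successor level T(alpha+1) iff its set of predecessors (of order type the
  level of t) has a greatest element, i.e. t has an immediate predecessor.\<close>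
definition on_successor_level :: "'a::order set \<Rightarrow> 'a \<Rightarrow> bool" where
  "on_successor_level T t \<longleftrightarrow> t \<in> T \<and> (\<exists>s\<in>preds T t. \<forall>u\<in>preds T t. u \<le> s)"

definition chain_complete :: "'a::order set \<Rightarrow> bool" where
  "chain_complete T \<longleftrightarrow>
     (\<forall>C. C \<subseteq> T \<longrightarrow> C \<noteq> {} \<longrightarrow> (\<forall>x\<in>C. \<forall>y\<in>C. x \<le> y \<or> y \<le> x) \<longrightarrow>
        (\<exists>s\<in>T. (\<forall>c\<in>C. c \<le> s) \<and> (\<forall>u\<in>T. (\<forall>c\<in>C. c \<le> u) \<longrightarrow> s \<le> u)))"

definition V :: "'a::order set \<Rightarrow> 'a \<Rightarrow> 'a set" where
  "V T t = {s \<in> T. t \<le> s}"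

definition coarse_wedge_topology :: "'a::order set \<Rightarrow> 'a topology" where
  "coarse_wedge_topology T =
     topology_generated_by
       ({V T t | t. t \<in> minimal_elements T \<or> on_successor_level T t} \<union>
        {T - V T t | t. t \<in> minimal_elements T \<or> on_successor_level T t})"

end

theory Submission
  imports Defs
begin

definition good :: "'a::order set \<Rightarrow> 'a \<Rightarrow> bool" where
  "good T t \<longleftrightarrow> t \<in> minimal_elements T \<or> on_successor_level T t"

definition sb :: "'a::order set \<Rightarrow> 'a set set" where
  "sb T = {V T t | t. t \<in> minimal_elements T \<or> on_successor_level T t} \<union>
        {T - V T t | t. t \<in> minimal_elements T \<or> on_successor_level T t}"

lemma cwt_eq: "coarse_wedge_topology T = topology_generated_by (sb T)"
  unfolding coarse_wedge_topology_def sb_def by simp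

lemma good_in: "good T t \<Longrightarrow> t \<in> T"
  unfolding good_def minimal_elements_def on_successor_level_def by auto

lemma tree_comp:
  assumes "is_tree T" "t \<in> T" "a \<in> T" "b \<in> T" "a \<le> t" "b \<le> t"
  shows "a \<le> b \<or> b \<le> a"
proof (cases "a = t \<or> b = t")
  case True then show ?thesis using assms by auto
next
  case False
  then have "a \<in> preds T t" "b \<in> preds T t" using assms unfolding preds_def by auto
  then show ?thesis using assms unfolding is_tree_def well_ordered_set_def by blast
qed

lemma tree_least:
  assumes "is_tree T" "t \<in> T" "B \<subseteq> T" "B \<noteq> {}" "\<forall>b\<in>B. b \<le> t"
  shows "\<exists>b\<in>B. \<forall>c\<in>B. b \<le> c"
proof (cases "B - {t} = {}")
  case True
  then have "B = {t}" using assms by auto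
  then show ?thesis by auto
next
  case False
  have "B - {t} \<subseteq> preds T t" using assms unfolding preds_def by force
  then obtain b where b: "b \<in> B - {t}" "\<forall>c\<in>B - {t}. b \<le> c"
    using False assms(1,2) unfolding is_tree_def well_ordered_set_def by metis
  then have "b \<le> t" using assms by auto
  then show ?thesis using b by (metis Diff_iff empty_iff insert_iff)
qed

lemma tree_succ:
  assumes "is_tree T" "p \<in> T" "c \<in> T" "p < c"
  shows "\<exists>u\<in>T. p < u \<and> u \<le> c \<and> (\<forall>v\<in>T. v < u \<longleftrightarrow> v \<le> p)"
proof -
  define B where "B = {u \<in> T. u \<le> c \<and> \<not> u \<le> p}"
  have "c \<in> B" using assms unfolding B_def by auto
  then obtain u where u: "u \<in> B" "\<forall>w\<in>B. u \<le> w"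
    using tree_least[OF assms(1,3), of B] unfolding B_def by blast
  have uT: "u \<in> T" "u \<le> c" "\<not> u \<le> p" using u unfolding B_def by auto
  have pu: "p < u" using tree_comp[OF assms(1,3) uT(1) assms(2) uT(2)] assms uT by (auto simp: less_le_not_le)
  have "\<forall>v\<in>T. v < u \<longleftrightarrow> v \<le> p"
  proof
    fix v assume vT: "v \<in> T"
    show "v < u \<longleftrightarrow> v \<le> p"
    proof
      assume vu: "v < u"
      then have "v \<le> c" using uT by auto
      have "v \<notin> B" using u vu by force
      then show "v \<le> p" using `v \<le> c` vT unfolding B_def by auto
    next
      assume "v \<le> p" then show "v < u" using pu by auto
    qed
  qed
  then show ?thesis using uT pu by auto
qed

lemma tree_succ_good:
  assumes "is_tree T" "p \<in> T" "c \<in> T" "p < c"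
  shows "\<exists>u\<in>T. p < u \<and> u \<le> c \<and> (\<forall>v\<in>T. v < u \<longleftrightarrow> v \<le> p) \<and> good T u"
proof -
  obtain u where u: "u\<in>T" "p < u" "u \<le> c" "\<forall>v\<in>T. v < u \<longleftrightarrow> v \<le> p"
    using tree_succ[OF assms] by blast
  have "on_successor_level T u"
    unfolding on_successor_level_def preds_def using u assms(2) by auto
  then show ?thesis using u unfolding good_def by auto
qed

lemma tree_min_below:
  assumes "is_tree T" "t \<in> T"
  shows "\<exists>m\<in>minimal_elements T. m \<le> t"
proof -
  obtain m where m: "m \<in> {u \<in> T. u \<le> t}" "\<forall>w\<in>{u \<in> T. u \<le> t}. m \<le> w"
    using tree_least[OF assms, of "{u \<in> T. u \<le> t}"] assms by blast
  have "preds T m = {}"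
  proof (rule ccontr)
    assume "preds T m \<noteq> {}"
    then obtain v where "v \<in> T" "v < m" unfolding preds_def by auto
    then show False using m by force
  qed
  then show ?thesis using m unfolding minimal_elements_def by auto
qed

lemma V_disj:
  assumes "is_tree T" "a \<in> T" "b \<in> T" "\<not> a \<le> b" "\<not> b \<le> a"
  shows "V T a \<inter> V T b = {}"
  using tree_comp[OF assms(1) _ assms(2,3)] assms(4,5) unfolding V_def by blast

lemma min_eq:
  assumes "m \<in> minimal_elements T" "t \<in> T" "t \<le> m" shows "t = m"
  using assms unfolding minimal_elements_def preds_def by auto

lemma topspace_cwt:
  assumes "is_tree T"
  shows "topspace (coarse_wedge_topology T) = T"
proof -
  have "\<Union>(sb T) \<subseteq> T" unfolding sb_def V_def by auto
  moreover have "T \<subseteq> \<Union>(sb T)"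
  proof
    fix x assume "x \<in> T"
    then obtain m where "m \<in> minimal_elements T" "m \<le> x" using tree_min_below[OF assms] by blast
    then have "V T m \<in> sb T" "x \<in> V T m" unfolding sb_def V_def using `x \<in> T` by auto
    then show "x \<in> \<Union>(sb T)" by auto
  qed
  ultimately show ?thesis unfolding cwt_eq by simp
qed

lemma open_V: "good T t \<Longrightarrow> openin (coarse_wedge_topology T) (V T t)"
  unfolding cwt_eq by (rule topology_generated_by_Basis) (auto simp: sb_def good_def)

lemma open_nV: "good T t \<Longrightarrow> openin (coarse_wedge_topology T) (T - V T t)"
  unfolding cwt_eq by (rule topology_generated_by_Basis) (auto simp: sb_def good_def)


lemma limit_tail:
  assumes tree: "is_tree T" and aT: "a \<in> T" and ne: "preds T a \<noteq> {}"
    and nomax: "\<not> (\<exists>s\<in>preds T a. \<forall>u\<in>preds T a. u \<le> s)"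
    and gen: "generate_topology_on (sb T) U"
  shows "a \<in> U \<longrightarrow> (\<exists>d\<in>preds T a. \<forall>e\<in>preds T a. d \<le> e \<longrightarrow> e \<in> U)"
  using gen
proof induction
  case Empty
  then show ?case by simp
next
  case (Int U1 U2)
  show ?case
  proof
    assume "a \<in> U1 \<inter> U2"
    then obtain d1 d2 where d1: "d1 \<in> preds T a" "\<forall>e\<in>preds T a. d1 \<le> e \<longrightarrow> e \<in> U1"
      and d2: "d2 \<in> preds T a" "\<forall>e\<in>preds T a. d2 \<le> e \<longrightarrow> e \<in> U2"
      using Int.IH by blast
    have "d1 \<le> d2 \<or> d2 \<le> d1"
      using d1(1) d2(1) tree aT unfolding is_tree_def well_ordered_set_def by blast
    then show "\<exists>d\<in>preds T a. \<forall>e\<in>preds T a. d \<le> e \<longrightarrow> e \<in> U1 \<inter> U2"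
      using d1 d2 by (meson IntI order_trans)
  qed
next
  case (UN K)
  show ?case
  proof
    assume "a \<in> \<Union>K"
    then obtain k where "k \<in> K" "a \<in> k" by auto
    then show "\<exists>d\<in>preds T a. \<forall>e\<in>preds T a. d \<le> e \<longrightarrow> e \<in> \<Union>K"
      using UN.IH by blast
  qed
next
  case (Basis s)
  then obtain t where gt: "good T t" and s: "s = V T t \<or> s = T - V T t"
    unfolding sb_def good_def by auto
  have tT: "t \<in> T" using good_in[OF gt] .
  show ?case
  proof
    assume as: "a \<in> s"
    show "\<exists>d\<in>preds T a. \<forall>e\<in>preds T a. d \<le> e \<longrightarrow> e \<in> s"
    proof (cases "s = V T t")
      case True
      then have "t \<le> a" using as unfolding V_def by auto
      moreover have "t \<noteq> a"
      proof
        assume "t = a"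
        then show False using gt ne nomax unfolding good_def minimal_elements_def on_successor_level_def
          by auto
      qed
      ultimately have "t \<in> preds T a" using tT unfolding preds_def by auto
      then show ?thesis using True unfolding V_def preds_def by auto
    next
      case False
      then have sE: "s = T - V T t" using s by auto
      then have "\<not> t \<le> a" using as unfolding V_def by auto
      obtain d where "d \<in> preds T a" using ne by auto
      moreover have "\<forall>e\<in>preds T a. e \<in> s"
        using `\<not> t \<le> a` sE unfolding preds_def V_def by (auto dest: order_trans less_imp_le)
      ultimately show ?thesis by auto
    qed
  qed
qed

lemma not_T2:
  assumes tree: "is_tree T" and H: "Hausdorff_space (coarse_wedge_topology T)"
    and aT: "a \<in> T" and bT: "b \<in> T" and eq: "preds T a = preds T b" and ne: "preds T a \<noteq> {}"
    and nomax: "\<not> (\<exists>s\<in>preds T a. \<forall>u\<in>preds T a. u \<le> s)"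
  shows "a = b"
proof (rule ccontr)
  assume "a \<noteq> b"
  then obtain U W where UW: "openin (coarse_wedge_topology T) U" "openin (coarse_wedge_topology T) W"
     "a \<in> U" "b \<in> W" "disjnt U W"
    using H aT bT topspace_cwt[OF tree] unfolding Hausdorff_space_def by metis
  have gU: "generate_topology_on (sb T) U" "generate_topology_on (sb T) W"
    using UW(1,2) unfolding cwt_eq by (auto dest: openin_topology_generated_by)
  obtain d1 where d1: "d1 \<in> preds T a" "\<forall>e\<in>preds T a. d1 \<le> e \<longrightarrow> e \<in> U"
    using limit_tail[OF tree aT ne nomax gU(1)] UW(3) by blast
  obtain d2 where d2: "d2 \<in> preds T a" "\<forall>e\<in>preds T a. d2 \<le> e \<longrightarrow> e \<in> W"
    using limit_tail[OF tree bT, of W] ne nomax gU(2) UW(4) eq by auto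
  have "d1 \<le> d2 \<or> d2 \<le> d1"
    using d1(1) d2(1) tree aT unfolding is_tree_def well_ordered_set_def by blast
  then have "\<exists>e. e \<in> U \<and> e \<in> W" using d1 d2 by blast
  then show False using UW(5) unfolding disjnt_def by auto
qed

lemma gen_eq:
  assumes "\<Union>S = U"
  shows "topology (arbitrary union_of (finite intersection_of (\<lambda>x. x \<in> S) relative_to U))
         = topology_generated_by S"
proof -
  have "openin (topology (arbitrary union_of (finite intersection_of (\<lambda>x. x \<in> S) relative_to U))) A
        \<longleftrightarrow> openin (topology_generated_by S) A" for A
  proof
    assume "openin (topology (arbitrary union_of (finite intersection_of (\<lambda>x. x \<in> S) relative_to U))) A"
    moreover have "openin (topology_generated_by S) U"
      using openin_topspace[of "topology_generated_by S"] assms by simp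
    ultimately show "openin (topology_generated_by S) A"
      using minimal_topology_subbase[of "\<lambda>x. x \<in> S" "topology_generated_by S" U A]
        topology_generated_by_Basis by blast
  next
    assume "openin (topology_generated_by S) A"
    then have "generate_topology_on S A" by (rule openin_topology_generated_by)
    then show "openin (topology (arbitrary union_of (finite intersection_of (\<lambda>x. x \<in> S) relative_to U))) A"
    proof (rule generate_topology_on_coarsest[rotated 2])
      fix s assume "s \<in> S"
      then have "s = U \<inter> s" using assms by auto
      then show "openin (topology (arbitrary union_of (finite intersection_of (\<lambda>x. x \<in> S) relative_to U))) s"
        using `s \<in> S` by (metis arbitrary_union_of_inc finite_intersection_of_inc openin_subbase relative_to_inc)
    qed simp
  qed
  then show ?thesis by (simp add: topology_eq)
qed


lemma fin_chain_max:
  fixes A :: "'a::order set"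
  assumes "finite A" "A \<noteq> {}" "\<forall>x\<in>A. \<forall>y\<in>A. x \<le> y \<or> y \<le> x"
  shows "\<exists>m\<in>A. \<forall>a\<in>A. a \<le> m"
  using assms
proof (induction A rule: finite_ne_induct)
  case (singleton x) then show ?case by auto
next
  case (insert x F)
  then obtain m where m: "m \<in> F" "\<forall>a\<in>F. a \<le> m" by auto
  have "x \<le> m \<or> m \<le> x" using insert.prems m(1) by auto
  then show ?case
  proof
    assume "x \<le> m" then show ?case using m by auto
  next
    assume "m \<le> x" then show ?case using m by (metis insert_iff order_refl order_trans)
  qed
qed

lemma fin_min:
  assumes tree: "is_tree T" and C: "compact_space (coarse_wedge_topology T)"
  shows "finite (minimal_elements T)"
proof -
  let ?M = "minimal_elements T"
  have "\<forall>U\<in>V T ` ?M. openin (coarse_wedge_topology T) U"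
    using open_V unfolding good_def by blast
  moreover have "topspace (coarse_wedge_topology T) \<subseteq> \<Union>(V T ` ?M)"
  proof
    fix x assume "x \<in> topspace (coarse_wedge_topology T)"
    then have "x \<in> T" using topspace_cwt[OF tree] by simp
    then obtain m where "m \<in> ?M" "m \<le> x" using tree_min_below[OF tree] by blast
    then show "x \<in> \<Union>(V T ` ?M)" using `x \<in> T` unfolding V_def by auto
  qed
  ultimately obtain F where F: "finite F" "F \<subseteq> V T ` ?M" "topspace (coarse_wedge_topology T) \<subseteq> \<Union>F"
    using C[unfolded compact_space_alt, rule_format, of "V T ` ?M"] by blast
  have inj: "inj_on (V T) ?M"
  proof (rule inj_onI)
    fix x y assume xy: "x \<in> ?M" "y \<in> ?M" "V T x = V T y"
    then have "x \<in> V T y" "y \<in> V T x" unfolding V_def minimal_elements_def by auto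
    then show "x = y" unfolding V_def by auto
  qed
  have "?M \<subseteq> {m \<in> ?M. V T m \<in> F}"
  proof
    fix m assume m: "m \<in> ?M"
    then have "m \<in> T" unfolding minimal_elements_def by auto
    then have "m \<in> \<Union>F" using F(3) topspace_cwt[OF tree] by auto
    then obtain K where "K \<in> F" "m \<in> K" by auto
    then obtain m' where m': "m' \<in> ?M" "K = V T m'" using F(2) by auto
    then have "m' \<le> m" "m' \<in> T" using `m \<in> K` unfolding V_def minimal_elements_def by auto
    then have "m' = m" using min_eq[OF m] by auto
    then show "m \<in> {m \<in> ?M. V T m \<in> F}" using m' `K \<in> F` m by auto
  qed
  moreover have "finite {m \<in> ?M. V T m \<in> F}"
  proof -
    have "V T ` {m \<in> ?M. V T m \<in> F} \<subseteq> F" by blast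
    then have "finite (V T ` {m \<in> ?M. V T m \<in> F})" using F(1) finite_subset by blast
    moreover have "inj_on (V T) {m \<in> ?M. V T m \<in> F}" using inj by (rule inj_on_subset) blast
    ultimately show ?thesis using finite_imageD by blast
  qed
  ultimately show ?thesis by (rule finite_subset)
qed

lemma closed_V:
  assumes tree: "is_tree T" and g: "good T t"
  shows "closedin (coarse_wedge_topology T) (V T t)"
  unfolding closedin_def topspace_cwt[OF tree] using open_nV[OF g] unfolding V_def by auto


lemma haus:
  assumes tree: "is_tree T" and cc: "chain_complete T"
  shows "Hausdorff_space (coarse_wedge_topology T)"
  unfolding Hausdorff_space_def topspace_cwt[OF tree]
proof (intro allI impI)
  fix s t assume st: "s \<in> T \<and> t \<in> T \<and> s \<noteq> t"
  then have sT: "s \<in> T" and tT: "t \<in> T" and ne: "s \<noteq> t" by auto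
  let ?X = "coarse_wedge_topology T"
  have cmp: "\<exists>U W. openin ?X U \<and> openin ?X W \<and> x \<in> U \<and> y \<in> W \<and> disjnt U W"
    if xy: "x \<in> T" "y \<in> T" "x < y" for x y
  proof -
    obtain u where u: "u \<in> T" "x < u" "u \<le> y" "good T u"
      using tree_succ_good[OF tree xy] by blast
    have "openin ?X (T - V T u)" "openin ?X (V T u)" using open_V open_nV u(4) by auto
    moreover have "x \<in> T - V T u" using u xy unfolding V_def by (auto simp: less_le_not_le)
    moreover have "y \<in> V T u" using u xy unfolding V_def by auto
    moreover have "disjnt (T - V T u) (V T u)" unfolding disjnt_def V_def by blast
    ultimately show ?thesis by blast
  qed
  have inc: "\<exists>U W. openin ?X U \<and> openin ?X W \<and> s \<in> U \<and> t \<in> W \<and> disjnt U W"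
    if inc1: "\<not> s \<le> t" and inc2: "\<not> t \<le> s"
  proof -
    have sep: "\<exists>U W. openin ?X U \<and> openin ?X W \<and> s \<in> U \<and> t \<in> W \<and> disjnt U W"
      if "good T a" "good T b" "a \<le> s" "b \<le> t" "\<not> a \<le> b" "\<not> b \<le> a" for a b
    proof -
      have "V T a \<inter> V T b = {}" using V_disj[OF tree good_in good_in] that by blast
      moreover have "openin ?X (V T a)" "openin ?X (V T b)" using open_V that by auto
      moreover have "s \<in> V T a" "t \<in> V T b" using that sT tT unfolding V_def by auto
      ultimately show ?thesis unfolding disjnt_def by blast
    qed
    define D where "D = {u \<in> T. u \<le> s \<and> u \<le> t}"
    show ?thesis
    proof (cases "D = {}")
      case True
      obtain ms where ms: "ms \<in> minimal_elements T" "ms \<le> s" using tree_min_below[OF tree sT] by blast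
      obtain mt where mt: "mt \<in> minimal_elements T" "mt \<le> t" using tree_min_below[OF tree tT] by blast
      have msT: "ms \<in> T" "mt \<in> T" using ms mt unfolding minimal_elements_def by auto
      have "\<not> ms \<le> mt"
      proof
        assume "ms \<le> mt"
        then have "ms \<in> D" using ms mt msT unfolding D_def by (metis (mono_tags, lifting) mem_Collect_eq order_trans)
        then show False using True by auto
      qed
      moreover have "\<not> mt \<le> ms"
      proof
        assume "mt \<le> ms"
        then have "mt \<in> D" using ms mt msT unfolding D_def by (metis (mono_tags, lifting) mem_Collect_eq order_trans)
        then show False using True by auto
      qed
      ultimately show ?thesis using sep[of ms mt] ms mt unfolding good_def by blast
    next
      case False
      have DT: "D \<subseteq> T" unfolding D_def by auto
      have Dch: "\<forall>x\<in>D. \<forall>y\<in>D. x \<le> y \<or> y \<le> x"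
        using tree_comp[OF tree sT] unfolding D_def by blast
      have "\<exists>d\<in>T. (\<forall>c\<in>D. c \<le> d) \<and> (\<forall>u\<in>T. (\<forall>c\<in>D. c \<le> u) \<longrightarrow> d \<le> u)"
        using cc DT False Dch unfolding chain_complete_def by blast
      then obtain d where d: "d \<in> T" "\<forall>c\<in>D. c \<le> d" "\<forall>u\<in>T. (\<forall>c\<in>D. c \<le> u) \<longrightarrow> d \<le> u"
        by blast
      have ds: "d \<le> s" "d \<le> t" using d sT tT unfolding D_def by auto
      have ds': "d < s" "d < t" using ds inc1 inc2 by (auto simp: less_le)
      obtain a where a: "a \<in> T" "d < a" "a \<le> s" "\<forall>v\<in>T. v < a \<longleftrightarrow> v \<le> d" "good T a"
        using tree_succ_good[OF tree d(1) sT ds'(1)] by blast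
      obtain b where b: "b \<in> T" "d < b" "b \<le> t" "\<forall>v\<in>T. v < b \<longleftrightarrow> v \<le> d" "good T b"
        using tree_succ_good[OF tree d(1) tT ds'(2)] by blast
      have "\<not> a \<le> b"
      proof
        assume "a \<le> b"
        then have "a \<in> D" using a b unfolding D_def by auto
        then show False using d(2) a(2) by auto
      qed
      moreover have "\<not> b \<le> a"
      proof
        assume "b \<le> a"
        then have "b \<in> D" using a b unfolding D_def by auto
        then show False using d(2) b(2) by auto
      qed
      ultimately show ?thesis using sep[of a b] a b by blast
    qed
  qed
  show "\<exists>U W. openin ?X U \<and> openin ?X W \<and> s \<in> U \<and> t \<in> W \<and> disjnt U W"
  proof (cases "s < t")
    case True then show ?thesis using cmp sT tT by blast
  next
    case False
    show ?thesis
    proof (cases "t < s")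
      case True
      then obtain U W where "openin ?X U" "openin ?X W" "t \<in> U" "s \<in> W" "disjnt U W"
        using cmp tT sT by blast
      then show ?thesis by (meson disjnt_sym)
    next
      case False
      have "\<not> s \<le> t" using `\<not> s < t` ne by (simp add: less_le)
      moreover have "\<not> t \<le> s" using False ne by (simp add: less_le)
      ultimately show ?thesis by (rule inc)
    qed
  qed
qed


lemma Union_sb: "is_tree T \<Longrightarrow> \<Union>(sb T) = T"
  using topspace_cwt[of T] unfolding cwt_eq by simp

lemma comp_of:
  assumes tree: "is_tree T" and cc: "chain_complete T" and fm: "finite (minimal_elements T)"
  shows "compact_space (coarse_wedge_topology T)"
proof (rule Alexander_subbase_alt[where U = T and \<B> = "sb T"])
  show "T \<subseteq> \<Union>(sb T)" using Union_sb[OF tree] by simp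
  show "topology (arbitrary union_of (finite intersection_of (\<lambda>x. x \<in> sb T) relative_to T))
        = coarse_wedge_topology T"
    unfolding cwt_eq by (rule gen_eq[OF Union_sb[OF tree]])
next
  fix C assume Csb: "C \<subseteq> sb T" and cov: "T \<subseteq> \<Union>C"
  have formK: "(\<exists>t. good T t \<and> K = V T t) \<or> (\<exists>t. good T t \<and> K = T - V T t)" if "K \<in> C" for K
    using that Csb unfolding sb_def good_def by blast
  define B where "B = {u. good T u \<and> T - V T u \<in> C}"
  have BT: "B \<subseteq> T" unfolding B_def using good_in by blast
  show "\<exists>C'. finite C' \<and> C' \<subseteq> C \<and> T \<subseteq> \<Union>C'"
  proof (cases "B = {}")
    case True
    let ?M = "minimal_elements T"
    have "V T ` ?M \<subseteq> C"
    proof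
      fix K assume "K \<in> V T ` ?M"
      then obtain m where m: "m \<in> ?M" "K = V T m" by auto
      then have "m \<in> T" unfolding minimal_elements_def by auto
      then obtain K' where K': "K' \<in> C" "m \<in> K'" using cov by auto
      then obtain t where t: "good T t" "K' = V T t"
        using formK[OF K'(1)] True unfolding B_def by blast
      then have "t \<in> T" "t \<le> m" using K' good_in unfolding V_def by auto
      then have "t = m" using min_eq[OF m(1)] by blast
      then show "K \<in> C" using t K' m by simp
    qed
    moreover have "T \<subseteq> \<Union>(V T ` ?M)"
    proof
      fix x assume "x \<in> T"
      then obtain m where "m \<in> ?M" "m \<le> x" using tree_min_below[OF tree] by blast
      then show "x \<in> \<Union>(V T ` ?M)" using `x \<in> T` unfolding V_def by auto
    qed
    ultimately show ?thesis using fm by blast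
  next
    case False
    show ?thesis
    proof (cases "\<exists>u1\<in>B. \<exists>u2\<in>B. \<not> u1 \<le> u2 \<and> \<not> u2 \<le> u1")
      case True
      then obtain u1 u2 where u: "u1 \<in> B" "u2 \<in> B" "\<not> u1 \<le> u2" "\<not> u2 \<le> u1" by blast
      have "V T u1 \<inter> V T u2 = {}" using V_disj[OF tree _ _ u(3,4)] u(1,2) BT by blast
      then have "T \<subseteq> \<Union>{T - V T u1, T - V T u2}" by auto
      moreover have "{T - V T u1, T - V T u2} \<subseteq> C" using u(1,2) unfolding B_def by auto
      ultimately show ?thesis by (meson finite.emptyI finite.insertI)
    next
      case nc: False
      have Bch: "\<forall>x\<in>B. \<forall>y\<in>B. x \<le> y \<or> y \<le> x" using nc by blast
      have "\<exists>s\<in>T. (\<forall>c\<in>B. c \<le> s) \<and> (\<forall>u\<in>T. (\<forall>c\<in>B. c \<le> u) \<longrightarrow> s \<le> u)"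
        using cc BT False Bch unfolding chain_complete_def by blast
      then obtain \<sigma> where \<sigma>: "\<sigma> \<in> T" "\<forall>c\<in>B. c \<le> \<sigma>" "\<forall>u\<in>T. (\<forall>c\<in>B. c \<le> u) \<longrightarrow> \<sigma> \<le> u"
        by blast
      obtain K where K: "K \<in> C" "\<sigma> \<in> K" using cov \<sigma>(1) by auto
      have "\<not> (\<exists>t. good T t \<and> K = T - V T t)"
      proof
        assume "\<exists>t. good T t \<and> K = T - V T t"
        then obtain t where t: "good T t" "K = T - V T t" by blast
        then have "t \<in> B" using K unfolding B_def by auto
        then have "t \<le> \<sigma>" using \<sigma> by auto
        then show False using K t \<sigma>(1) unfolding V_def by auto
      qed
      then obtain t where t: "good T t" "K = V T t" using formK[OF K(1)] by blast
      have tT: "t \<in> T" "t \<le> \<sigma>" using t K good_in unfolding V_def by auto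
      obtain u where u: "u \<in> B" "t \<le> u"
      proof (cases "\<exists>u\<in>B. \<not> u \<le> t")
        case True
        then obtain u where "u \<in> B" "\<not> u \<le> t" by blast
        moreover have "u \<le> \<sigma>" "u \<in> T" using \<sigma> `u \<in> B` BT by auto
        ultimately have "t \<le> u" using tree_comp[OF tree \<sigma>(1) tT(1) `u \<in> T` tT(2)] by blast
        then show ?thesis using that `u \<in> B` by blast
      next
        case False
        then have "\<sigma> \<le> t" using \<sigma>(3) tT(1) by blast
        then have ts: "t = \<sigma>" using tT by auto
        have "\<sigma> \<in> B"
        proof (rule ccontr)
          assume nB: "\<sigma> \<notin> B"
          obtain b where b: "b \<in> B" using `B \<noteq> {}` by blast
          have lt: "\<forall>c\<in>B. c \<in> preds T \<sigma>"
            using \<sigma>(2) nB BT unfolding preds_def by (metis less_le mem_Collect_eq subsetD)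
          then have "preds T \<sigma> \<noteq> {}" using b by blast
          then have "\<not> \<sigma> \<in> minimal_elements T" unfolding minimal_elements_def by auto
          then have "on_successor_level T \<sigma>" using t(1) ts unfolding good_def by simp
          then obtain p where p: "p \<in> preds T \<sigma>" "\<forall>v\<in>preds T \<sigma>. v \<le> p"
            unfolding on_successor_level_def by blast
          have "p \<in> T" "p < \<sigma>" using p(1) unfolding preds_def by auto
          moreover have "\<forall>c\<in>B. c \<le> p" using lt p(2) by blast
          ultimately show False using \<sigma>(3) by (meson leD)
        qed
        then show ?thesis using that ts by blast
      qed
      have "T \<subseteq> \<Union>{V T t, T - V T u}" unfolding V_def using u(2) by (auto intro: order_trans)
      moreover have "{V T t, T - V T u} \<subseteq> C" using u(1) K(1) t(2) unfolding B_def by auto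
      ultimately show ?thesis by (meson finite.emptyI finite.insertI)
    qed
  qed
qed


lemma cc_of:
  assumes tree: "is_tree T" and Cp: "compact_space (coarse_wedge_topology T)"
    and H: "Hausdorff_space (coarse_wedge_topology T)"
  shows "chain_complete T"
  unfolding chain_complete_def
proof (intro allI impI)
  fix C assume CT: "C \<subseteq> T" and Cne: "C \<noteq> {}" and ch: "\<forall>x\<in>C. \<forall>y\<in>C. x \<le> y \<or> y \<le> x"
  show "\<exists>s\<in>T. (\<forall>c\<in>C. c \<le> s) \<and> (\<forall>u\<in>T. (\<forall>c\<in>C. c \<le> u) \<longrightarrow> s \<le> u)"
  proof (cases "\<exists>c\<in>C. \<forall>c'\<in>C. c' \<le> c")
    case True
    then obtain c where "c \<in> C" "\<forall>c'\<in>C. c' \<le> c" by blast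
    then show ?thesis using CT by blast
  next
    case nomaxC: False
    let ?X = "coarse_wedge_topology T"
    define G where "G = {s. good T s \<and> (\<exists>c\<in>C. s \<le> c)}"
    obtain c0 where c0: "c0 \<in> C" using Cne by blast
    obtain m0 where m0: "m0 \<in> minimal_elements T" "m0 \<le> c0"
      using tree_min_below[OF tree] c0 CT by blast
    have m0G: "m0 \<in> G" using m0 c0 unfolding G_def good_def by blast
    have "\<Inter>(V T ` G) \<noteq> {}"
    proof -
      have cl: "\<forall>K\<in>V T ` G. closedin ?X K"
      proof
        fix K assume "K \<in> V T ` G"
        then obtain s where s: "s \<in> G" "K = V T s" by blast
        then have "good T s" by (simp add: G_def)
        then show "closedin ?X K" using closed_V[OF tree] s(2) by simp
      qed
      have fip: "\<Inter>F \<noteq> {}" if F: "finite F" "F \<subseteq> V T ` G" for F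
      proof -
        obtain G0 where G0: "G0 \<subseteq> G" "finite G0" "F = V T ` G0"
          using finite_subset_image[OF F(1,2)] by blast
        show ?thesis
        proof (cases "G0 = {}")
          case True then show ?thesis using G0 by simp
        next
          case False
          define f where "f = (\<lambda>s. SOME c. c \<in> C \<and> s \<le> c)"
          have f: "f s \<in> C \<and> s \<le> f s" if "s \<in> G0" for s
            using that G0(1) unfolding G_def f_def by (metis (mono_tags, lifting) mem_Collect_eq someI subsetD)
          have "finite (f ` G0)" "f ` G0 \<noteq> {}" "\<forall>x\<in>f ` G0. \<forall>y\<in>f ` G0. x \<le> y \<or> y \<le> x"
            using G0(2) False f ch by auto
          then obtain cm where cm: "cm \<in> f ` G0" "\<forall>a\<in>f ` G0. a \<le> cm" using fin_chain_max by blast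
          have "cm \<in> T" using cm(1) f CT by auto
          moreover have "\<forall>s\<in>G0. s \<le> cm"
          proof
            fix s assume "s \<in> G0"
            then have "f s \<le> cm" "s \<le> f s" using cm(2) f by auto
            then show "s \<le> cm" by (rule order_trans[rotated])
          qed
          ultimately have "cm \<in> \<Inter>F" unfolding G0(3) V_def by auto
          then show ?thesis by blast
        qed
      qed
      have fip': "\<forall>F. finite F \<and> F \<subseteq> V T ` G \<longrightarrow> \<Inter>F \<noteq> {}" using fip by blast
      show ?thesis
        by (rule Cp[unfolded compact_space_fip, THEN spec[of _ "V T ` G"], THEN mp, OF conjI[OF cl fip']])
    qed
    then obtain x where x: "x \<in> \<Inter>(V T ` G)" by blast
    have "x \<in> V T m0" using x m0G by blast
    then have xT: "x \<in> T" unfolding V_def by simp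
    have xG: "\<forall>s\<in>G. s \<le> x"
    proof
      fix s assume "s \<in> G"
      then have "x \<in> V T s" using x by blast
      then show "s \<le> x" unfolding V_def by simp
    qed
    have ubx: "\<forall>c\<in>C. c \<le> x"
    proof
      fix c assume cC: "c \<in> C"
      have cT: "c \<in> T" using cC CT by auto
      show "c \<le> x"
      proof (cases "good T c")
        case True
        then have "c \<in> G" using cC unfolding G_def by auto
        then show ?thesis using xG by auto
      next
        case False
        then have pne: "preds T c \<noteq> {}" using cT unfolding good_def minimal_elements_def by auto
        have pnm: "\<not> (\<exists>s\<in>preds T c. \<forall>u\<in>preds T c. u \<le> s)"
          using False cT unfolding good_def on_successor_level_def by auto
        have pc: "\<forall>p\<in>preds T c. p < x"
        proof
          fix p assume "p \<in> preds T c"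
          then have pT: "p \<in> T" "p < c" unfolding preds_def by auto
          obtain u where u: "u \<in> T" "p < u" "u \<le> c" "good T u"
            using tree_succ_good[OF tree pT(1) cT pT(2)] by blast
          then have "u \<in> G" using cC unfolding G_def by auto
          then show "p < x" using xG u(2) by (meson less_le_trans)
        qed
        show ?thesis
        proof (rule ccontr)
          assume ncx: "\<not> c \<le> x"
          have xnp: "x \<notin> preds T c"
          proof
            assume "x \<in> preds T c"
            then have "x < c" unfolding preds_def by auto
            then obtain u where u: "u \<in> T" "x < u" "u \<le> c" "good T u"
              using tree_succ_good[OF tree xT cT] by blast
            then have "u \<in> G" using cC unfolding G_def by auto
            then show False using xG u(2) by (meson leD)
          qed
          define B where "B = {u \<in> T. u \<le> x \<and> u \<notin> preds T c}"
          have "x \<in> B" using xT xnp unfolding B_def by auto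
          then obtain y where y: "y \<in> B" "\<forall>w\<in>B. y \<le> w"
            using tree_least[OF tree xT, of B] unfolding B_def by blast
          have yT: "y \<in> T" "y \<le> x" "y \<notin> preds T c" using y(1) unfolding B_def by auto
          have "preds T y = preds T c"
          proof
            show "preds T y \<subseteq> preds T c"
            proof
              fix v assume "v \<in> preds T y"
              then have v: "v \<in> T" "v < y" unfolding preds_def by auto
              show "v \<in> preds T c"
              proof (rule ccontr)
                assume "v \<notin> preds T c"
                then have "v \<in> B" using v yT unfolding B_def by auto
                then show False using y(2) v(2) by (meson leD)
              qed
            qed
          next
            show "preds T c \<subseteq> preds T y"
            proof
              fix p assume pp: "p \<in> preds T c"
              then have pT: "p \<in> T" "p < c" unfolding preds_def by auto
              have "p < x" using pc pp by auto
              then have "p \<le> y \<or> y \<le> p"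
                using tree_comp[OF tree xT pT(1) yT(1) _ yT(2)] by auto
              moreover have "\<not> y \<le> p"
              proof
                assume "y \<le> p"
                then have "y < c" using pT by auto
                then show False using yT unfolding preds_def by auto
              qed
              ultimately have "p < y" by (auto simp: less_le)
              then show "p \<in> preds T y" using pT unfolding preds_def by auto
            qed
          qed
          then have "y = c" using not_T2[OF tree H yT(1) cT] pne pnm by auto
          then show False using yT ncx by auto
        qed
      qed
    qed
    define D' where "D' = {p \<in> T. \<exists>c\<in>C. p < c}"
    have bigger: "\<exists>c'\<in>C. c < c'" if cC: "c \<in> C" for c
    proof -
      obtain c' where "c' \<in> C" "\<not> c' \<le> c" using nomaxC cC by blast
      moreover have "c \<le> c' \<or> c' \<le> c" using ch cC `c' \<in> C` by blast
      ultimately have "c < c'" by (auto simp: less_le)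
      then show ?thesis using `c' \<in> C` by blast
    qed
    have sig: "\<exists>\<sigma>\<in>T. \<sigma> \<le> w \<and> (\<forall>c\<in>C. c \<le> \<sigma>) \<and> preds T \<sigma> = D'"
      if w: "w \<in> T" "\<forall>c\<in>C. c \<le> w" for w
    proof -
      define B2 where "B2 = {u \<in> T. u \<le> w \<and> (\<forall>c\<in>C. c \<le> u)}"
      have "w \<in> B2" using w unfolding B2_def by auto
      then obtain \<sigma> where s: "\<sigma> \<in> B2" "\<forall>v\<in>B2. \<sigma> \<le> v"
        using tree_least[OF tree w(1), of B2] unfolding B2_def by blast
      have sT: "\<sigma> \<in> T" "\<sigma> \<le> w" "\<forall>c\<in>C. c \<le> \<sigma>" using s(1) unfolding B2_def by auto
      have "preds T \<sigma> = D'"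
      proof
        show "preds T \<sigma> \<subseteq> D'"
        proof
          fix p assume "p \<in> preds T \<sigma>"
          then have p: "p \<in> T" "p < \<sigma>" unfolding preds_def by auto
          have "p \<notin> B2" using s(2) p(2) by (meson leD)
          then obtain c where c: "c \<in> C" "\<not> c \<le> p" using p sT unfolding B2_def by auto
          have "p \<le> c" using tree_comp[OF tree sT(1) p(1), of c] c CT sT p by auto
          then have "p < c" using c by (auto simp: less_le)
          then show "p \<in> D'" using p c unfolding D'_def by auto
        qed
      next
        show "D' \<subseteq> preds T \<sigma>"
        proof
          fix p assume "p \<in> D'"
          then obtain c where pc: "p \<in> T" "c \<in> C" "p < c" unfolding D'_def by auto
          then have "p < \<sigma>" using sT(3) less_le_trans by blast
          then show "p \<in> preds T \<sigma>" unfolding preds_def using pc(1) by auto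
        qed
      qed
      then show ?thesis using sT by blast
    qed
    have D'ne: "D' \<noteq> {}"
    proof -
      obtain c1 where "c1 \<in> C" "c0 < c1" using bigger c0 by blast
      then have "c0 \<in> D'" using c0 CT unfolding D'_def by auto
      then show ?thesis by auto
    qed
    have D'nm: "\<not> (\<exists>s\<in>D'. \<forall>u\<in>D'. u \<le> s)"
    proof
      assume "\<exists>s\<in>D'. \<forall>u\<in>D'. u \<le> s"
      then obtain d where d: "d \<in> D'" "\<forall>u\<in>D'. u \<le> d" by blast
      then obtain c where c: "c \<in> C" "d < c" unfolding D'_def by auto
      obtain c' where "c' \<in> C" "c < c'" using bigger c(1) by blast
      then have "c \<in> D'" using c CT unfolding D'_def by auto
      then show False using d(2) c(2) by (meson leD)
    qed
    obtain \<sigma> where \<sigma>: "\<sigma> \<in> T" "\<forall>c\<in>C. c \<le> \<sigma>" "preds T \<sigma> = D'"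
      using sig[OF xT ubx] by blast
    have "\<forall>u\<in>T. (\<forall>c\<in>C. c \<le> u) \<longrightarrow> \<sigma> \<le> u"
    proof (intro ballI impI)
      fix u assume u: "u \<in> T" "\<forall>c\<in>C. c \<le> u"
      obtain \<tau> where \<tau>: "\<tau> \<in> T" "\<tau> \<le> u" "preds T \<tau> = D'" using sig[OF u] by blast
      have "\<sigma> = \<tau>" using not_T2[OF tree H \<sigma>(1) \<tau>(1)] \<sigma>(3) \<tau>(3) D'ne D'nm by auto
      then show "\<sigma> \<le> u" using \<tau> by simp
    qed
    then show ?thesis using \<sigma> by blast
  qed
qed

theorem corollary3p5:
  fixes T :: "'a::order set"
  assumes "is_tree T"
  shows "compact_space (coarse_wedge_topology T) \<and> Hausdorff_space (coarse_wedge_topology T)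
     \<longleftrightarrow> chain_complete T \<and> finite (minimal_elements T)"
proof
  assume "compact_space (coarse_wedge_topology T) \<and> Hausdorff_space (coarse_wedge_topology T)"
  then show "chain_complete T \<and> finite (minimal_elements T)"
    using fin_min[OF assms] cc_of[OF assms] by simp
next
  assume "chain_complete T \<and> finite (minimal_elements T)"
  then show "compact_space (coarse_wedge_topology T) \<and> Hausdorff_space (coarse_wedge_topology T)"
    using comp_of[OF assms] haus[OF assms] by simp
qed

end
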